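(* For any parameter of the ranking block, for every instance $I$ (with $n,m\ge1$) and every preference profile $\succcurlyeq_I$ reported truthfully, the matching matrix $\hat{\bm M}_I$ output by NeuralSD at inference satisfies $irv(\hat{\bm M}_I,\succcurlyeq_I)\le 1/2$; i.e. $\max_{I}irv(\hat{\bm M}_I,\succcurlyeq_I)\le1/2$.
   Context: An instance consists of workers $W=\{w_1,\dots,w_n\}$, firms $F=\{f_1,\dots,f_m\}$ and public contexts $\bm X_W\in\mathbb R^{n\times d}$, $\bm X_F\in\mathbb R^{m\times d}$. Workers have linear-order preferences on $F\cup\{\perp\}$, firms on $W\cup\{\perp\}$ ($\perp$ = unmatched); $b\succ_a b'$ means $b\ne b'$, $b\succcurlyeq_a b'$. Serial dictatorship (SD) with ranking $\bm r$ of $W\cup F$: for $k=1,\dots,n+m$, if $r_k$ is not yet matched, it is assigned its most preferred option among $\perp$ and the not-yet-matched agents of the other side. NeuralSD at inference: compute $\bm X=[\bm X_W;\bm X_F]$, $\bm A=\mathrm{softmax}_{\rm row}(\bm X\bm W^Q(\bm X\bm W^K)^\top/\sqrt{d_{\rm emb}})\bm X\bm W^V$, scores $\bm a=\bm w\bm A^\top+b$, tie-broken scores $\bm a+\mathrm{rank}(\bm a)$ with $\mathrm{rank}(\bm a)_i=\#\{j:a_j<a_i\text{ or }(a_j=a_i,j<i)\}$; sort agents by these scores (argsort) to get a ranking $\bm r$, and output the SD matching with ranking $\bm r$ on the reports. Matching matrix $\bm M\in\{0,1\}^{(n+1)\times(m+1)}$: $M_{ij}=1$ iff $w_i$ matched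 with $f_j$, $M_{i,m+1}=1$ iff $w_i$ unmatched, $M_{n+1,j}=1$ iff $f_j$ unmatched, $M_{n+1,m+1}=0$. For $i\in[n],j\in[m]$: $p_{ij}=\frac1m\big(\mathbb I[f_j\succ_{w_i}\perp]+\sum_{j''=1}^m(\mathbb I[f_j\succ_{w_i}f_{j''}]-\mathbb I[\perp\succ_{w_i}f_{j''}])\big)$, $q_{ji}=\frac1n\big(\mathbb I[w_i\succ_{f_j}\perp]+\sum_{i''=1}^n(\mathbb I[w_i\succ_{f_j}w_{i''}]-\mathbb I[\perp\succ_{f_j}w_{i''}])\big)$, and $irv(\bm M,\succcurlyeq)=\frac1{2n}\sum_{i,j}M_{ij}\max\{-q_{ji},0\}+\frac1{2m}\sum_{i,j}M_{ij}\max\{-p_{ij},0\}$ (sums over $i\in[n],j\in[m]$). *)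

theory Defs
  imports Complex_Main
begin

(* Agents: workers W 0..n-1, firms F 0..m-1 (0-based indices). *)
datatype agent = Wk nat | Fk nat

(* Preferences: a worker's weak linear order on firms \<union> {\<bottom>} is a relation on
   nat option (None = \<bottom>, Some j = firm j); (x,y) \<in> R means x \<succeq> y.
   Analogously a firm's order is on workers \<union> {\<bottom>}. *)
definition strict_pref :: "'a rel \<Rightarrow> 'a \<Rightarrow> 'a \<Rightarrow> bool" where
  "strict_pref R x y \<longleftrightarrow> x \<noteq> y \<and> (x, y) \<in> R"

definition best :: "'a rel \<Rightarrow> 'a set \<Rightarrow> 'a" where
  "best R S = (THE x. x \<in> S \<and> (\<forall>y\<in>S. (x, y) \<in> R))"

(* State of SD: set of matched pairs (worker i, firm j) and the set of agents already
   matched (to a partner or to \<bottom>). *)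
type_synonym sd_state = "(nat \<times> nat) set \<times> agent set"

fun sd_step :: "nat \<Rightarrow> nat \<Rightarrow> (nat \<Rightarrow> nat option rel) \<Rightarrow> (nat \<Rightarrow> nat option rel)
    \<Rightarrow> agent \<Rightarrow> sd_state \<Rightarrow> sd_state" where
  "sd_step n m Pw Pf (Wk i) (P, D) =
     (if Wk i \<in> D then (P, D) else
       (case best (Pw i) (insert None (Some ` {j. j < m \<and> Fk j \<notin> D})) of
          None \<Rightarrow> (P, insert (Wk i) D)
        | Some j \<Rightarrow> (insert (i, j) P, insert (Wk i) (insert (Fk j) D))))"
| "sd_step n m Pw Pf (Fk j) (P, D) =
     (if Fk j \<in> D then (P, D) else
       (case best (Pf j) (insert None (Some ` {i. i < n \<and> Wk i \<notin> D})) of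
          None \<Rightarrow> (P, insert (Fk j) D)
        | Some i \<Rightarrow> (insert (i, j) P, insert (Fk j) (insert (Wk i) D))))"

definition serial_dictatorship :: "nat \<Rightarrow> nat \<Rightarrow> (nat \<Rightarrow> nat option rel) \<Rightarrow> (nat \<Rightarrow> nat option rel)
    \<Rightarrow> agent list \<Rightarrow> (nat \<times> nat) set" where
  "serial_dictatorship n m Pw Pf r = fst (fold (sd_step n m Pw Pf) r ({}, {}))"

(* Matching matrix of size (n+1) x (m+1), 0-based: row n / column m stand for \<bottom>. *)
definition matching_matrix :: "nat \<Rightarrow> nat \<Rightarrow> (nat \<times> nat) set \<Rightarrow> nat \<Rightarrow> nat \<Rightarrow> real" where
  "matching_matrix n m P i j =
     (if i < n \<and> j < m then (if (i, j) \<in> P then 1 else 0)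
      else if i < n \<and> j = m then (if \<exists>j'<m. (i, j') \<in> P then 0 else 1)
      else if i = n \<and> j < m then (if \<exists>i'<n. (i', j) \<in> P then 0 else 1)
      else 0)"

(* NeuralSD ranking block. Matrices are functions nat \<Rightarrow> nat \<Rightarrow> real with explicit sizes:
   X : (n+m) x d, WQ, WK : d x de, WV : d x dv, w : dv, b scalar. *)
definition stack_ctx :: "nat \<Rightarrow> (nat \<Rightarrow> nat \<Rightarrow> real) \<Rightarrow> (nat \<Rightarrow> nat \<Rightarrow> real) \<Rightarrow> nat \<Rightarrow> nat \<Rightarrow> real" where
  "stack_ctx n XW XF i l = (if i < n then XW i l else XF (i - n) l)"

definition attn_scores :: "nat \<Rightarrow> nat \<Rightarrow> nat \<Rightarrow> nat \<Rightarrow> (nat \<Rightarrow> nat \<Rightarrow> real)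
    \<Rightarrow> (nat \<Rightarrow> nat \<Rightarrow> real) \<Rightarrow> (nat \<Rightarrow> nat \<Rightarrow> real) \<Rightarrow> (nat \<Rightarrow> nat \<Rightarrow> real)
    \<Rightarrow> (nat \<Rightarrow> real) \<Rightarrow> real \<Rightarrow> nat \<Rightarrow> real" where
  "attn_scores N d de dv X WQ WK WV w b =
     (let Q = (\<lambda>i k. \<Sum>l<d. X i l * WQ l k);
          K = (\<lambda>i k. \<Sum>l<d. X i l * WK l k);
          V = (\<lambda>i c. \<Sum>l<d. X i l * WV l c);
          S = (\<lambda>i j. (\<Sum>k<de. Q i k * K j k) / sqrt (real de));
          Sm = (\<lambda>i j. exp (S i j) / (\<Sum>j'<N. exp (S i j')));
          A = (\<lambda>i c. \<Sum>j<N. Sm i j * V j c)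
      in (\<lambda>i. (\<Sum>c<dv. w c * A i c) + b))"

definition tie_rank :: "nat \<Rightarrow> (nat \<Rightarrow> real) \<Rightarrow> nat \<Rightarrow> real" where
  "tie_rank N a i = real (card {j. j < N \<and> (a j < a i \<or> (a j = a i \<and> j < i))})"

definition agent_of :: "nat \<Rightarrow> nat \<Rightarrow> agent" where
  "agent_of n k = (if k < n then Wk k else Fk (k - n))"

definition neural_ranking :: "nat \<Rightarrow> nat \<Rightarrow> nat \<Rightarrow> nat \<Rightarrow> nat
    \<Rightarrow> (nat \<Rightarrow> nat \<Rightarrow> real) \<Rightarrow> (nat \<Rightarrow> nat \<Rightarrow> real)
    \<Rightarrow> (nat \<Rightarrow> nat \<Rightarrow> real) \<Rightarrow> (nat \<Rightarrow> nat \<Rightarrow> real) \<Rightarrow> (nat \<Rightarrow> nat \<Rightarrow> real)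
    \<Rightarrow> (nat \<Rightarrow> real) \<Rightarrow> real \<Rightarrow> agent list" where
  "neural_ranking n m d de dv XW XF WQ WK WV w b =
     (let N = n + m;
          a = attn_scores N d de dv (stack_ctx n XW XF) WQ WK WV w b;
          t = (\<lambda>i. a i + tie_rank N a i)
      in map (agent_of n) (sort_key t [0..<N]))"

definition neural_sd_matrix :: "nat \<Rightarrow> nat \<Rightarrow> nat \<Rightarrow> nat \<Rightarrow> nat
    \<Rightarrow> (nat \<Rightarrow> nat \<Rightarrow> real) \<Rightarrow> (nat \<Rightarrow> nat \<Rightarrow> real)
    \<Rightarrow> (nat \<Rightarrow> nat \<Rightarrow> real) \<Rightarrow> (nat \<Rightarrow> nat \<Rightarrow> real) \<Rightarrow> (nat \<Rightarrow> nat \<Rightarrow> real)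
    \<Rightarrow> (nat \<Rightarrow> real) \<Rightarrow> real
    \<Rightarrow> (nat \<Rightarrow> nat option rel) \<Rightarrow> (nat \<Rightarrow> nat option rel) \<Rightarrow> nat \<Rightarrow> nat \<Rightarrow> real" where
  "neural_sd_matrix n m d de dv XW XF WQ WK WV w b Pw Pf =
     matching_matrix n m
       (serial_dictatorship n m Pw Pf (neural_ranking n m d de dv XW XF WQ WK WV w b))"

definition ind :: "bool \<Rightarrow> real" where
  "ind P = (if P then 1 else 0)"

definition p_val :: "nat \<Rightarrow> (nat \<Rightarrow> nat option rel) \<Rightarrow> nat \<Rightarrow> nat \<Rightarrow> real" where
  "p_val m Pw i j = (1 / real m) * (ind (strict_pref (Pw i) (Some j) None)
      + (\<Sum>j''<m. ind (strict_pref (Pw i) (Some j) (Some j''))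
                 - ind (strict_pref (Pw i) None (Some j''))))"

definition q_val :: "nat \<Rightarrow> (nat \<Rightarrow> nat option rel) \<Rightarrow> nat \<Rightarrow> nat \<Rightarrow> real" where
  "q_val n Pf j i = (1 / real n) * (ind (strict_pref (Pf j) (Some i) None)
      + (\<Sum>i''<n. ind (strict_pref (Pf j) (Some i) (Some i''))
                 - ind (strict_pref (Pf j) None (Some i''))))"

definition irv :: "nat \<Rightarrow> nat \<Rightarrow> (nat \<Rightarrow> nat option rel) \<Rightarrow> (nat \<Rightarrow> nat option rel)
    \<Rightarrow> (nat \<Rightarrow> nat \<Rightarrow> real) \<Rightarrow> real" where
  "irv n m Pw Pf M =
     (1 / (2 * real n)) * (\<Sum>i<n. \<Sum>j<m. M i j * max (- q_val n Pf j i) 0)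
   + (1 / (2 * real m)) * (\<Sum>i<n. \<Sum>j<m. M i j * max (- p_val m Pw i j) 0)"

end

theory Submission
  imports Defs
begin

lemma best_prop:
  assumes lo: "linear_order_on A R" and fin: "finite S" and ne: "S \<noteq> {}" and sub: "S \<subseteq> A"
  shows "best R S \<in> S \<and> (\<forall>y\<in>S. (best R S, y) \<in> R)"
proof -
  have rf: "refl_on A R" and tr: "trans R" and an: "antisym R" and to: "total_on A R"
    using lo unfolding linear_order_on_def partial_order_on_def preorder_on_def by auto
  have ex: "\<exists>x\<in>S. \<forall>y\<in>S. (x, y) \<in> R" using fin ne sub
  proof (induction S rule: finite_ne_induct)
    case (singleton x)
    then show ?case using rf by (auto simp: refl_on_def)
  next
    case (insert a S)
    then obtain x where x: "x \<in> S" "\<forall>y\<in>S. (x, y) \<in> R" by auto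
    show ?case
    proof (cases "(a, x) \<in> R")
      case True
      then have "\<forall>y\<in>S. (a, y) \<in> R" using x tr by (meson transE)
      moreover have "(a, a) \<in> R" using rf insert by (auto simp: refl_on_def)
      ultimately show ?thesis by auto
    next
      case False
      then have "a \<noteq> x" using rf insert x by (auto simp: refl_on_def)
      then have "(x, a) \<in> R" using to False insert x by (auto simp: total_on_def)
      then show ?thesis using x by auto
    qed
  qed
  then obtain x where x: "x \<in> S" "\<forall>y\<in>S. (x, y) \<in> R" by auto
  have "best R S = x" unfolding best_def
  proof (rule the_equality)
    show "x \<in> S \<and> (\<forall>y\<in>S. (x, y) \<in> R)" using x by auto
  next
    fix x' assume "x' \<in> S \<and> (\<forall>y\<in>S. (x', y) \<in> R)"
    then show "x' = x" using x an by (meson antisymD)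
  qed
  then show ?thesis using x by auto
qed

definition sd_inv :: "nat \<Rightarrow> nat \<Rightarrow> (nat \<Rightarrow> nat option rel) \<Rightarrow> (nat \<Rightarrow> nat option rel) \<Rightarrow> sd_state \<Rightarrow> bool" where
  "sd_inv n m Pw Pf st \<longleftrightarrow> (\<forall>(i,j)\<in>fst st. i<n \<and> j<m \<and> Wk i \<in> snd st \<and> Fk j \<in> snd st \<and>
      (strict_pref (Pw i) (Some j) None \<or> strict_pref (Pf j) (Some i) None))
    \<and> (\<forall>i j j'. (i,j)\<in>fst st \<longrightarrow> (i,j')\<in>fst st \<longrightarrow> j=j')
    \<and> (\<forall>i i' j. (i,j)\<in>fst st \<longrightarrow> (i',j)\<in>fst st \<longrightarrow> i=i')"

lemma step_inv:
  assumes lw: "\<And>i. i < n \<Longrightarrow> linear_order_on (insert None (Some ` {..<m})) (Pw i)"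
    and lf: "\<And>j. j < m \<Longrightarrow> linear_order_on (insert None (Some ` {..<n})) (Pf j)"
    and ag: "a \<in> Wk ` {..<n} \<union> Fk ` {..<m}"
    and iv: "sd_inv n m Pw Pf st"
  shows "sd_inv n m Pw Pf (sd_step n m Pw Pf a st)"
proof -
  obtain P D where st: "st = (P, D)" by (cases st)
  from ag show ?thesis
  proof
    assume "a \<in> Wk ` {..<n}"
    then obtain i where a: "a = Wk i" and i: "i < n" by auto
    show ?thesis
    proof (cases "Wk i \<in> D")
      case True then show ?thesis using iv st a by simp
    next
      case False
      let ?S = "insert None (Some ` {j. j < m \<and> Fk j \<notin> D})"
      have bp: "best (Pw i) ?S \<in> ?S \<and> (\<forall>y\<in>?S. (best (Pw i) ?S, y) \<in> Pw i)"
        by (rule best_prop[OF lw[OF i]]) auto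
      show ?thesis
      proof (cases "best (Pw i) ?S")
        case None
        then show ?thesis using iv st a False by (auto simp: sd_inv_def)
      next
        case (Some j)
        have j: "j < m" "Fk j \<notin> D" using bp Some by auto
        have sp: "strict_pref (Pw i) (Some j) None" using bp Some by (auto simp: strict_pref_def)
        have "sd_inv n m Pw Pf (insert (i, j) P, insert (Wk i) (insert (Fk j) D))"
          using iv st False j sp i unfolding sd_inv_def by fastforce
        then show ?thesis using st a False Some by simp
      qed
    qed
  next
    assume "a \<in> Fk ` {..<m}"
    then obtain j where a: "a = Fk j" and j: "j < m" by auto
    show ?thesis
    proof (cases "Fk j \<in> D")
      case True then show ?thesis using iv st a by simp
    next
      case False
      let ?S = "insert None (Some ` {i. i < n \<and> Wk i \<notin> D})"
      have bp: "best (Pf j) ?S \<in> ?S \<and> (\<forall>y\<in>?S. (best (Pf j) ?S, y) \<in> Pf j)"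
        by (rule best_prop[OF lf[OF j]]) auto
      show ?thesis
      proof (cases "best (Pf j) ?S")
        case None
        then show ?thesis using iv st a False by (auto simp: sd_inv_def)
      next
        case (Some i)
        have i: "i < n" "Wk i \<notin> D" using bp Some by auto
        have sp: "strict_pref (Pf j) (Some i) None" using bp Some by (auto simp: strict_pref_def)
        have "sd_inv n m Pw Pf (insert (i, j) P, insert (Fk j) (insert (Wk i) D))"
          using iv st False j sp i unfolding sd_inv_def by fastforce
        then show ?thesis using st a False Some by simp
      qed
    qed
  qed
qed

lemma fold_inv:
  assumes lw: "\<And>i. i < n \<Longrightarrow> linear_order_on (insert None (Some ` {..<m})) (Pw i)"
    and lf: "\<And>j. j < m \<Longrightarrow> linear_order_on (insert None (Some ` {..<n})) (Pf j)"
  shows "set r \<subseteq> Wk ` {..<n} \<union> Fk ` {..<m} \<Longrightarrow> sd_inv n m Pw Pf st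
     \<Longrightarrow> sd_inv n m Pw Pf (fold (sd_step n m Pw Pf) r st)"
proof (induction r arbitrary: st)
  case Nil then show ?case by simp
next
  case (Cons a r)
  then show ?case using step_inv[OF lw lf] by simp
qed

lemma ranking_range:
  "set (neural_ranking n m d de dv XW XF WQ WK WV w b) \<subseteq> Wk ` {..<n} \<union> Fk ` {..<m}"
  unfolding neural_ranking_def Let_def
  by (auto simp: agent_of_def)

lemma pref_diff_nonneg:
  assumes tr: "trans R" and an: "antisym R" and xz: "strict_pref R x z"
  shows "ind (strict_pref R x y) - ind (strict_pref R z y) \<ge> 0"
proof (cases "strict_pref R z y")
  case True
  have "(x, y) \<in> R" using True xz tr unfolding strict_pref_def by (meson transE)
  moreover have "x \<noteq> y"
  proof
    assume "x = y"
    then show False using True xz an unfolding strict_pref_def by (meson antisymD)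
  qed
  ultimately show ?thesis by (simp add: strict_pref_def ind_def)
next
  case False then show ?thesis by (simp add: ind_def)
qed

lemma p_nonneg:
  assumes "linear_order_on A (Pw i)" and "strict_pref (Pw i) (Some j) None"
  shows "p_val m Pw i j \<ge> 0"
proof -
  have tr: "trans (Pw i)" and an: "antisym (Pw i)"
    using assms(1) unfolding linear_order_on_def partial_order_on_def preorder_on_def by auto
  have "(\<Sum>j''<m. ind (strict_pref (Pw i) (Some j) (Some j'')) - ind (strict_pref (Pw i) None (Some j''))) \<ge> 0"
    by (rule sum_nonneg) (rule pref_diff_nonneg[OF tr an assms(2)])
  moreover have "ind (strict_pref (Pw i) (Some j) None) \<ge> 0" by (simp add: ind_def)
  ultimately show ?thesis unfolding p_val_def by simp
qed

lemma q_nonneg: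
  assumes "linear_order_on A (Pf j)" and "strict_pref (Pf j) (Some i) None"
  shows "q_val n Pf j i \<ge> 0"
proof -
  have tr: "trans (Pf j)" and an: "antisym (Pf j)"
    using assms(1) unfolding linear_order_on_def partial_order_on_def preorder_on_def by auto
  have "(\<Sum>i''<n. ind (strict_pref (Pf j) (Some i) (Some i'')) - ind (strict_pref (Pf j) None (Some i''))) \<ge> 0"
    by (rule sum_nonneg) (rule pref_diff_nonneg[OF tr an assms(2)])
  moreover have "ind (strict_pref (Pf j) (Some i) None) \<ge> 0" by (simp add: ind_def)
  ultimately show ?thesis unfolding q_val_def by simp
qed

lemma p_ge: assumes "m \<ge> 1" shows "p_val m Pw i j \<ge> -1"
proof -
  have "(\<Sum>j''<m. ind (strict_pref (Pw i) (Some j) (Some j'')) - ind (strict_pref (Pw i) None (Some j''))) \<ge> (\<Sum>j''<m. -1)"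
    by (rule sum_mono) (simp add: ind_def)
  then have "ind (strict_pref (Pw i) (Some j) None) + (\<Sum>j''<m. ind (strict_pref (Pw i) (Some j) (Some j'')) - ind (strict_pref (Pw i) None (Some j''))) \<ge> - real m"
    by (simp add: ind_def)
  then show ?thesis using assms unfolding p_val_def by (simp add: field_simps)
qed

lemma q_ge: assumes "n \<ge> 1" shows "q_val n Pf j i \<ge> -1"
proof -
  have "(\<Sum>i''<n. ind (strict_pref (Pf j) (Some i) (Some i'')) - ind (strict_pref (Pf j) None (Some i''))) \<ge> (\<Sum>i''<n. -1)"
    by (rule sum_mono) (simp add: ind_def)
  then have "ind (strict_pref (Pf j) (Some i) None) + (\<Sum>i''<n. ind (strict_pref (Pf j) (Some i) (Some i'')) - ind (strict_pref (Pf j) None (Some i''))) \<ge> - real n"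
    by (simp add: ind_def)
  then show ?thesis using assms unfolding q_val_def by (simp add: field_simps)
qed

theorem proposition5:
  fixes n m d de dv :: nat
    and XW XF WQ WK WV :: "nat \<Rightarrow> nat \<Rightarrow> real"
    and w :: "nat \<Rightarrow> real" and b :: real
    and Pw Pf :: "nat \<Rightarrow> nat option rel"
  assumes "n \<ge> 1" and "m \<ge> 1"
    and "\<And>i. i < n \<Longrightarrow> linear_order_on (insert None (Some ` {..<m})) (Pw i)"
    and "\<And>j. j < m \<Longrightarrow> linear_order_on (insert None (Some ` {..<n})) (Pf j)"
  shows "irv n m Pw Pf (neural_sd_matrix n m d de dv XW XF WQ WK WV w b Pw Pf) \<le> 1 / 2"
proof -
  let ?r = "neural_ranking n m d de dv XW XF WQ WK WV w b"
  let ?st = "fold (sd_step n m Pw Pf) ?r ({}, {})"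
  define P where "P = fst ?st"
  have iv: "sd_inv n m Pw Pf ?st"
    by (rule fold_inv[OF assms(3,4) ranking_range]) (auto simp: sd_inv_def)
  have pairs: "\<And>i j. (i, j) \<in> P \<Longrightarrow> strict_pref (Pw i) (Some j) None \<or> strict_pref (Pf j) (Some i) None"
    and inr: "\<And>i j. (i, j) \<in> P \<Longrightarrow> i < n \<and> j < m"
    using iv unfolding sd_inv_def P_def by fastforce+
  have uj: "\<And>i j j'. (i,j)\<in>P \<Longrightarrow> (i,j')\<in>P \<Longrightarrow> j=j'"
    and ui: "\<And>i i' j. (i,j)\<in>P \<Longrightarrow> (i',j)\<in>P \<Longrightarrow> i=i'"
    using iv unfolding sd_inv_def P_def by blast+
  define M where "M = neural_sd_matrix n m d de dv XW XF WQ WK WV w b Pw Pf"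
  have M: "\<And>i j. i < n \<Longrightarrow> j < m \<Longrightarrow> M i j = (if (i, j) \<in> P then 1 else 0)"
    unfolding M_def neural_sd_matrix_def serial_dictatorship_def matching_matrix_def P_def by simp
  define c where "c = max (1 / (2 * real n)) (1 / (2 * real m))"
  define t where "t i j = (1 / (2 * real n)) * max (- q_val n Pf j i) 0 + (1 / (2 * real m)) * max (- p_val m Pw i j) 0" for i j
  have tb: "M i j * t i j \<le> (if (i, j) \<in> P then c else 0)" if "i < n" "j < m" for i j
  proof (cases "(i, j) \<in> P")
    case True
    have q1: "max (- q_val n Pf j i) 0 \<le> 1" using q_ge[OF assms(1)] by simp
    have p1: "max (- p_val m Pw i j) 0 \<le> 1" using p_ge[OF assms(2)] by simp
    from pairs[OF True] show ?thesis
    proof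
      assume "strict_pref (Pw i) (Some j) None"
      then have "p_val m Pw i j \<ge> 0" using p_nonneg assms(3) that by blast
      then have "t i j \<le> 1 / (2 * real n)" unfolding t_def using q1 assms(1)
        by (simp add: divide_right_mono)
      then show ?thesis using M[OF that] True unfolding c_def by simp
    next
      assume "strict_pref (Pf j) (Some i) None"
      then have "q_val n Pf j i \<ge> 0" using q_nonneg assms(4) that by blast
      then have "t i j \<le> 1 / (2 * real m)" unfolding t_def using p1 assms(2)
        by (simp add: divide_right_mono)
      then show ?thesis using M[OF that] True unfolding c_def by simp
    qed
  next
    case False then show ?thesis using M[OF that] by simp
  qed
  have irv_eq: "irv n m Pw Pf M = (\<Sum>i<n. \<Sum>j<m. M i j * t i j)"
    unfolding irv_def t_def
    by (simp add: sum_distrib_left sum.distrib[symmetric] algebra_simps)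
  show ?thesis
  proof (cases "n \<le> m")
    case True
    have c: "c = 1 / (2 * real n)" unfolding c_def using True assms by (simp add: frac_le)
    have row: "(\<Sum>j<m. M i j * t i j) \<le> c" if i: "i < n" for i
    proof -
      obtain j0 where j0: "\<And>j. (i, j) \<in> P \<Longrightarrow> j = j0" using uj by blast
      have "(\<Sum>j<m. M i j * t i j) \<le> (\<Sum>j<m. if j = j0 then c else 0)"
      proof (rule sum_mono)
        fix j assume "j \<in> {..<m}"
        then have "M i j * t i j \<le> (if (i, j) \<in> P then c else 0)" using tb[OF i] by simp
        moreover have "c \<ge> 0" unfolding c_def by (simp add: le_max_iff_disj)
        ultimately show "M i j * t i j \<le> (if j = j0 then c else 0)" using j0[of j]
          by (cases "(i, j) \<in> P") auto
      qed
      also have "\<dots> \<le> c" using c assms by simp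
      finally show ?thesis .
    qed
    have "(\<Sum>i<n. \<Sum>j<m. M i j * t i j) \<le> (\<Sum>i<n. c)" by (rule sum_mono) (simp add: row)
    also have "\<dots> = 1 / 2" using c assms by simp
    finally show ?thesis using irv_eq M_def by simp
  next
    case False
    have c: "c = 1 / (2 * real m)" unfolding c_def using False assms by (simp add: frac_le)
    have col: "(\<Sum>i<n. M i j * t i j) \<le> c" if j: "j < m" for j
    proof -
      obtain i0 where i0: "\<And>i. (i, j) \<in> P \<Longrightarrow> i = i0" using ui by blast
      have "(\<Sum>i<n. M i j * t i j) \<le> (\<Sum>i<n. if i = i0 then c else 0)"
      proof (rule sum_mono)
        fix i assume "i \<in> {..<n}"
        then have "M i j * t i j \<le> (if (i, j) \<in> P then c else 0)" using tb j by simp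
        moreover have "c \<ge> 0" unfolding c_def by (simp add: le_max_iff_disj)
        ultimately show "M i j * t i j \<le> (if i = i0 then c else 0)" using i0[of i]
          by (cases "(i, j) \<in> P") auto
      qed
      also have "\<dots> \<le> c" using c assms by simp
      finally show ?thesis .
    qed
    have "(\<Sum>i<n. \<Sum>j<m. M i j * t i j) = (\<Sum>j<m. \<Sum>i<n. M i j * t i j)" by (rule sum.swap)
    also have "\<dots> \<le> (\<Sum>j<m. c)" by (rule sum_mono) (simp add: col)
    also have "\<dots> = 1 / 2" using c assms by simp
    finally show ?thesis using irv_eq M_def by simp
  qed
qed

end
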